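(* Let $n,m\ge1$ and $\vec w\in\hat N^{n+m}$. Then there exist unique $\vec u\in\hat N^n$ and $\vec v\in\hat N^m$ such that $\vec u\nearrow\vec v\le\vec w\le\vec u\nwarrow\vec v$ (componentwise). Consequently the intervals $[\vec u\nearrow\vec v,\vec u\nwarrow\vec v]$, $(\vec u,\vec v)\in\hat N^n\times\hat N^m$, form a partition of $\hat N^{n+m}$.
   Context: $\hat N^n$ ($n\ge1$) is the set of names of planar rooted binary trees with $n$ internal vertices: writing a tree as a complete expression (full binary parenthesization, outermost product included) of $x_1\cdots x_{n+1}$, its name $\vec v\in\mathbb N^n$ has $v_i=i$ if at least one left parenthesis stands immediately left of $x_i$, and otherwise $v_i=j$ where the rightmost of the right parentheses immediately following $x_i$ matches a left parenthesis in the run immediately preceding $x_j$. For $\vec u\in\hat N^n,\vec v\in\hat N^m$: $\vec u\nearrow\vec v=(\vec u,n\triangleright v_1,\dots,n\triangleright v_m)$ with $n\triangleright a=a+n$ for $a\neq1$, $n\triangleright1=1$, and $\vec u\nwarrow\vec v=(u_1,\dots,u_n,v_1+n,\dots,v_m+n)$. Componentwise order: $\vec a\le\vec b$ iff $a_i\le b_i$ for all $i$; intervals are taken inside $\hat N^{n+m}$. *)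

theory Defs
  imports Main
begin

text \<open>A tree is written as a complete
  expression in the leaves x_1, ..., x_(k+1), numbered left to right: a leaf is a
  variable x_i, and an internal vertex with subtrees l, r is the parenthesised
  product (l r).\<close>

datatype btree = Leaf | Node btree btree

fun internal :: "btree \<Rightarrow> nat" where
  "internal Leaf = 0"
| "internal (Node l r) = Suc (internal l + internal r)"

fun leaves :: "btree \<Rightarrow> nat" where
  "leaves Leaf = 1"
| "leaves (Node l r) = leaves l + leaves r"

text \<open>spans t k: with the leaves of t numbered starting at k, the set of pairs (lo, hi)
  such that some internal vertex of t is written as a parenthesised expression
  "( x_lo ... x_hi )", i.e. there is a matching pair of parentheses whose left
  parenthesis lies in the run immediately preceding x_lo and whose right parenthesis
  lies in the run immediately following x_hi.\<close>

fun spans :: "btree \<Rightarrow> nat \<Rightarrow> (nat \<times> nat) set" where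
  "spans Leaf k = {}"
| "spans (Node l r) k =
     insert (k, k + leaves l + leaves r - 1) (spans l k \<union> spans r (k + leaves l))"

text \<open>The name of a tree with n internal vertices: v_i = i if some left parenthesis
  stands immediately left of x_i; otherwise the right parentheses immediately after x_i
  correspond to the spans (lo, i), the rightmost of them is the outermost one, i.e.
  the one with least lo, and its left parenthesis is in the run preceding x_lo.\<close>

definition name_entry :: "btree \<Rightarrow> nat \<Rightarrow> nat" where
  "name_entry t i =
     (if \<exists>h. (i, h) \<in> spans t 1 then i else Min {lo. (lo, i) \<in> spans t 1})"

definition tree_name :: "btree \<Rightarrow> nat list" where
  "tree_name t = map (name_entry t) [1..<internal t + 1]"

definition Nhat :: "nat \<Rightarrow> nat list set" where
  "Nhat n = {tree_name t | t. internal t = n}"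

definition tri :: "nat \<Rightarrow> nat \<Rightarrow> nat" where
  "tri n a = (if a = 1 then 1 else a + n)"

definition nearr :: "nat list \<Rightarrow> nat list \<Rightarrow> nat list" where
  "nearr u v = u @ map (tri (length u)) v"

definition nwarr :: "nat list \<Rightarrow> nat list \<Rightarrow> nat list" where
  "nwarr u v = u @ map (\<lambda>a. a + length u) v"

definition cw_le :: "nat list \<Rightarrow> nat list \<Rightarrow> bool" where
  "cw_le a b = list_all2 (\<le>) a b"

definition Nint :: "nat \<Rightarrow> nat list \<Rightarrow> nat list \<Rightarrow> nat list set" where
  "Nint k a b = {w \<in> Nhat k. cw_le a w \<and> cw_le w b}"

end

theory Submission
  imports Defs
begin

lemma leaves_int: "leaves t = internal t + 1"
  by (induction t) auto

lemma spans_bounds: "(lo, hi) \<in> spans t k \<Longrightarrow> k \<le> lo \<and> lo < hi \<and> hi \<le> k + internal t"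
proof (induction t arbitrary: k lo hi)
  case Leaf then show ?case by simp
next
  case (Node l r)
  then show ?case by (auto simp: leaves_int dest!: Node.IH)
qed

lemma spans_finite: "finite (spans t k)"
  by (induction t arbitrary: k) auto

lemma spans_Node: "spans (Node l r) k = insert (k, k + internal (Node l r))
   (spans l k \<union> spans r (k + internal l + 1))"
  by (simp add: leaves_int add.assoc)

declare spans.simps(2)[simp del]
declare spans_Node[simp]

lemma spans_shift: "spans t (k + d) = (\<lambda>(a,b). (a+d, b+d)) ` spans t k"
proof (induction t arbitrary: k)
  case Leaf then show ?case by simp
next
  case (Node l r)
  have "spans (Node l r) (k + d) = insert (k + d, k + internal (Node l r) + d)
   (spans l (k+d) \<union> spans r (k + internal l + 1 + d))"
    unfolding spans_Node by (simp add: algebra_simps)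
  also have "\<dots> = (\<lambda>(a,b). (a+d, b+d)) ` spans (Node l r) k"
    unfolding spans_Node Node.IH by (simp add: image_Un)
  finally show ?case .
qed

lemma root_span: "t \<noteq> Leaf \<Longrightarrow> (k, k + internal t) \<in> spans t k"
  by (cases t) (auto simp: spans_Node)

lemma leaf_cover: "internal t \<ge> 1 \<Longrightarrow> k \<le> j \<Longrightarrow> j \<le> k + internal t \<Longrightarrow>
   (\<exists>h. (j,h) \<in> spans t k) \<or> (\<exists>lo. (lo,j) \<in> spans t k)"
proof (induction t arbitrary: k)
  case Leaf then show ?case by simp
next
  case (Node l r)
  show ?case
  proof (cases "j \<le> k + internal l")
    case jl: True
    show ?thesis
    proof (cases "l = Leaf")
      case True
      have "j = k" using True jl Node.prems by simp
      then show ?thesis by (auto simp: spans_Node)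
    next
      case False
      then have "internal l \<ge> 1" by (cases l) auto
      from Node.IH(1)[OF this Node.prems(2) jl] show ?thesis by (auto simp: spans_Node)
    qed
  next
    case jr: False
    show ?thesis
    proof (cases "r = Leaf")
      case True
      have "j = k + internal (Node l r)" using True jr Node.prems by simp
      then show ?thesis by (auto simp: spans_Node)
    next
      case False
      then have "internal r \<ge> 1" by (cases r) auto
      from Node.IH(2)[OF this, of "k + internal l + 1"] jr Node.prems
      show ?thesis by (auto simp: spans_Node)
    qed
  qed
qed

lemma map_plus_upt: "map (\<lambda>j. j + d) [i..<k] = [i+d..<k+d]"
  by (induction k) auto

definition nm :: "btree \<Rightarrow> nat \<Rightarrow> nat \<Rightarrow> nat" where
  "nm t k i = (if \<exists>h. (i, h) \<in> spans t k then i else Min {lo. (lo, i) \<in> spans t k})"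

lemma nm_shift:
  assumes "internal t \<ge> 1" "k \<le> i" "i \<le> k + internal t"
  shows "nm t (k + d) (i + d) = nm t k i + d"
proof -
  let ?S = "spans t k"
  have e1: "(\<exists>h. (i + d, h) \<in> spans t (k + d)) = (\<exists>h. (i, h) \<in> ?S)"
    unfolding spans_shift by force
  have e2: "{lo. (lo, i + d) \<in> spans t (k + d)} = (\<lambda>x. x + d) ` {lo. (lo, i) \<in> ?S}"
    unfolding spans_shift by force
  have fin: "finite {lo. (lo, i) \<in> ?S}"
    using finite_imageI[OF spans_finite[of t k], of fst] by (rule finite_subset[rotated]) force
  show ?thesis
  proof (cases "\<exists>h. (i, h) \<in> ?S")
    case True then show ?thesis unfolding nm_def e1 by simp
  next
    case False
    with leaf_cover[OF assms] have ne: "{lo. (lo, i) \<in> ?S} \<noteq> {}" by auto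
    have "Min ((\<lambda>x. x + d) ` {lo. (lo, i) \<in> ?S}) = Min {lo. (lo, i) \<in> ?S} + d"
      by (rule mono_Min_commute[symmetric, OF _ fin ne]) (simp add: mono_def)
    then show ?thesis using False unfolding nm_def e1 e2 by simp
  qed
qed

lemma nm_left:
  assumes "k \<le> i" "i < k + internal l"
  shows "nm (Node l r) k i = nm l k i"
proof -
  have lnl: "l \<noteq> Leaf" using assms by auto
  have e1: "(\<exists>h. (i, h) \<in> spans (Node l r) k) = (\<exists>h. (i, h) \<in> spans l k)"
    using assms root_span[OF lnl, of k] by (auto simp: spans_Node dest: spans_bounds)
  have e2: "{lo. (lo, i) \<in> spans (Node l r) k} = {lo. (lo, i) \<in> spans l k}"
    using assms by (auto simp: spans_Node dest: spans_bounds)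
  show ?thesis unfolding nm_def e1 e2 ..
qed

lemma nm_mid: "nm (Node l r) k (k + internal l) = k"
proof (cases "l = Leaf")
  case True
  have "\<exists>h. (k + internal l, h) \<in> spans (Node l r) k" using True by auto
  then show ?thesis using True by (simp add: nm_def)
next
  case False
  then have "internal l \<noteq> 0" by (cases l) auto
  have e1: "\<not> (\<exists>h. (k + internal l, h) \<in> spans (Node l r) k)"
    using False \<open>internal l \<noteq> 0\<close> by (auto simp: spans_Node dest: spans_bounds)
  have fin: "finite {lo. (lo, k + internal l) \<in> spans (Node l r) k}"
    using finite_imageI[OF spans_finite[of "Node l r" k], of fst] by (rule finite_subset[rotated]) force
  have "k \<in> {lo. (lo, k + internal l) \<in> spans (Node l r) k}"
    using root_span[OF False, of k] by (simp add: spans_Node)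
  moreover have "\<forall>x \<in> {lo. (lo, k + internal l) \<in> spans (Node l r) k}. k \<le> x"
    by (auto dest: spans_bounds)
  ultimately have "Min {lo. (lo, k + internal l) \<in> spans (Node l r) k} = k"
    using fin by (meson Min_eqI)
  then show ?thesis using e1 unfolding nm_def by simp
qed

lemma nm_right:
  assumes "k + internal l + 1 \<le> i" "i < k + internal (Node l r)"
  shows "nm (Node l r) k i = nm r (k + internal l + 1) i"
proof -
  have e1: "(\<exists>h. (i, h) \<in> spans (Node l r) k) = (\<exists>h. (i, h) \<in> spans r (k + internal l + 1))"
    using assms by (auto simp: spans_Node dest: spans_bounds)
  have e2: "{lo. (lo, i) \<in> spans (Node l r) k} = {lo. (lo, i) \<in> spans r (k + internal l + 1)}"
    using assms by (auto simp: spans_Node dest: spans_bounds)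
  show ?thesis unfolding nm_def e1 e2 ..
qed

lemma tn_def2: "tree_name t = map (nm t 1) [1..<internal t + 1]"
  unfolding tree_name_def name_entry_def nm_def ..

lemma tn_Leaf: "tree_name Leaf = []"
  by (simp add: tn_def2)

lemma tn_len: "length (tree_name t) = internal t"
  by (simp add: tree_name_def)

lemma tn_Node: "tree_name (Node l r) = tree_name l @ 1 # map (\<lambda>x. x + internal l + 1) (tree_name r)"
proof -
  let ?a = "internal l" and ?b = "internal r" and ?T = "Node l r"
  have split: "[1..<internal ?T + 1] = [1..<?a+1] @ (?a + 1) # [?a+2..<?a+?b+2]"
  proof -
    have "[1..<internal ?T + 1] = [1..<?a+1] @ [?a+1..<?a+?b+2]"
      using upt_add_eq_append[of 1 "?a+1" "?b+1"] by (simp add: algebra_simps)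
    also have "[?a+1..<?a+?b+2] = (?a + 1) # [?a+2..<?a+?b+2]"
      by (simp add: upt_conv_Cons del: upt_Suc)
    finally show ?thesis .
  qed
  have p1: "map (nm ?T 1) [1..<?a+1] = tree_name l"
    unfolding tn_def2 by (rule map_cong) (auto intro: nm_left)
  have p2: "nm ?T 1 (?a + 1) = 1" using nm_mid[of l r 1] by simp
  have p3: "map (nm ?T 1) [?a+2..<?a+?b+2] = map (\<lambda>x. x + ?a + 1) (tree_name r)"
  proof (cases "?b = 0")
    case True then show ?thesis by (simp add: tn_def2)
  next
    case False
    have "map (nm ?T 1) [?a+2..<?a+?b+2] = map (\<lambda>j. nm ?T 1 (j + (?a+1))) [1..<?b+1]"
    proof -
      have "[?a+2..<?a+?b+2] = map (\<lambda>j. j + (?a+1)) [1..<?b+1]"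
        using map_plus_upt[of "?a+1" 1 "?b+1"] by (simp add: algebra_simps)
      then show ?thesis by simp
    qed
    also have "\<dots> = map (\<lambda>j. nm r 1 j + (?a+1)) [1..<?b+1]"
    proof (rule map_cong[OF refl])
      fix j assume j: "j \<in> set [1..<?b+1]"
      have "nm ?T 1 (j + (?a+1)) = nm r (1 + (?a + 1)) (j + (?a+1))"
        using j by (subst nm_right) (auto simp: algebra_simps)
      also have "\<dots> = nm r 1 j + (?a+1)"
        using j False by (intro nm_shift) auto
      finally show "nm ?T 1 (j + (?a+1)) = nm r 1 j + (?a+1)" .
    qed
    finally show ?thesis by (simp add: tn_def2 algebra_simps)
  qed
  show ?thesis unfolding tn_def2[of ?T] split using p1 p2 p3 by (simp add: tn_def2)
qed

lemma tn_pos: "x \<in> set (tree_name t) \<Longrightarrow> 1 \<le> x"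
  by (induction t arbitrary: x) (auto simp: tn_Node tn_Leaf)

lemma prefix_ex: "k \<le> internal t \<Longrightarrow> \<exists>s. internal s = k \<and> tree_name s = take k (tree_name t)"
proof (induction t arbitrary: k)
  case Leaf then show ?case by (auto simp: tn_Leaf intro: exI[of _ Leaf])
next
  case (Node l r)
  show ?case
  proof (cases "k \<le> internal l")
    case True
    from Node.IH(1)[OF True] obtain s where "internal s = k" "tree_name s = take k (tree_name l)" by blast
    then show ?thesis using True by (auto simp: tn_Node tn_len)
  next
    case False
    then obtain k' where k': "k = internal l + 1 + k'" by (metis add_Suc less_imp_Suc_add not_le add.commute Suc_eq_plus1 add.assoc)
    with Node.prems have "k' \<le> internal r" by simp
    from Node.IH(2)[OF this] obtain s where s: "internal s = k'" "tree_name s = take k' (tree_name r)" by blast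
    show ?thesis
      by (rule exI[of _ "Node l s"]) (simp add: s k' tn_Node tn_len take_map)
  qed
qed

definition g :: "nat \<Rightarrow> nat \<Rightarrow> nat" where
  "g n x = (if n < x then x - n else 1)"

lemma suffix_ex: "k \<le> internal t \<Longrightarrow>
   \<exists>s. internal s = internal t - k \<and> tree_name s = map (g k) (drop k (tree_name t))"
proof (induction t arbitrary: k)
  case Leaf then show ?case by (auto simp: tn_Leaf intro: exI[of _ Leaf])
next
  case (Node l r)
  show ?case
  proof (cases "k \<le> internal l")
    case True
    from Node.IH(1)[OF True] obtain s where s: "internal s = internal l - k"
       "tree_name s = map (g k) (drop k (tree_name l))" by blast
    have "map (g k) (drop k (tree_name (Node l r))) = tree_name (Node s r)"
      using True by (auto simp: tn_Node tn_len s g_def Suc_diff_le)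
    then show ?thesis using True s by (intro exI[of _ "Node s r"]) simp
  next
    case False
    then obtain k' where k': "k = internal l + 1 + k'" by (metis add_Suc less_imp_Suc_add not_le add.commute Suc_eq_plus1 add.assoc)
    with Node.prems have "k' \<le> internal r" by simp
    from Node.IH(2)[OF this] obtain s where s: "internal s = internal r - k'"
       "tree_name s = map (g k') (drop k' (tree_name r))" by blast
    have "map (g k) (drop k (tree_name (Node l r))) = tree_name s"
      by (simp add: s k' tn_Node tn_len drop_map g_def)
    then show ?thesis using s k' by (intro exI[of _ s]) simp
  qed
qed

lemma Nhat_len: "w \<in> Nhat k \<Longrightarrow> length w = k"
  by (auto simp: Nhat_def tn_len)

lemma Nhat_pos: "w \<in> Nhat k \<Longrightarrow> x \<in> set w \<Longrightarrow> 1 \<le> x"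
  by (auto simp: Nhat_def dest: tn_pos)

lemma pw: "1 \<le> (a::nat) \<Longrightarrow> 1 \<le> x \<Longrightarrow> (tri n a \<le> x \<and> x \<le> a + n) \<longleftrightarrow> a = g n x"
  by (auto simp: tri_def g_def)

lemma char:
  assumes u: "u \<in> Nhat n" and v: "v \<in> Nhat m" and w: "w \<in> Nhat (n + m)"
  shows "(cw_le (nearr u v) w \<and> cw_le w (nwarr u v)) \<longleftrightarrow> (u = take n w \<and> v = map (g n) (drop n w))"
proof -
  have lu: "length u = n" using Nhat_len[OF u] .
  have lv: "length v = m" using Nhat_len[OF v] .
  have lw: "length w = n + m" using Nhat_len[OF w] .
  have wsplit: "w = take n w @ drop n w" by simp
  have A: "cw_le (nearr u v) w \<longleftrightarrow> list_all2 (\<le>) u (take n w) \<and> list_all2 (\<le>) (map (tri n) v) (drop n w)"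
    unfolding cw_le_def nearr_def lu
    by (subst wsplit, rule list_all2_append) (simp add: lu lw)
  have B: "cw_le w (nwarr u v) \<longleftrightarrow> list_all2 (\<le>) (take n w) u \<and> list_all2 (\<le>) (drop n w) (map (\<lambda>a. a + n) v)"
    unfolding cw_le_def nwarr_def lu
    by (subst wsplit, rule list_all2_append) (simp add: lu lw)
  have C: "(list_all2 (\<le>) u (take n w) \<and> list_all2 (\<le>) (take n w) u) \<longleftrightarrow> u = take n w"
    by (auto simp: list_all2_conv_all_nth lu lw intro!: nth_equalityI intro: antisym)
  have D: "(list_all2 (\<le>) (map (tri n) v) (drop n w) \<and> list_all2 (\<le>) (drop n w) (map (\<lambda>a. a + n) v))
     \<longleftrightarrow> v = map (g n) (drop n w)"
  proof -
    have "(list_all2 (\<le>) (map (tri n) v) (drop n w) \<and> list_all2 (\<le>) (drop n w) (map (\<lambda>a. a + n) v))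
       \<longleftrightarrow> (\<forall>i<m. tri n (v!i) \<le> drop n w ! i \<and> drop n w ! i \<le> v!i + n)"
      by (auto simp: list_all2_conv_all_nth lv lw)
    also have "\<dots> \<longleftrightarrow> (\<forall>i<m. v!i = g n (drop n w ! i))"
    proof -
      have "\<And>i. i < m \<Longrightarrow> (tri n (v!i) \<le> drop n w ! i \<and> drop n w ! i \<le> v!i + n) = (v!i = g n (drop n w ! i))"
      proof (rule pw)
        fix i assume i: "i < m"
        show "1 \<le> v ! i" using Nhat_pos[OF v, of "v ! i"] i lv by simp
        show "1 \<le> drop n w ! i" using Nhat_pos[OF w, of "w ! (n + i)"] i lw by simp
      qed
      then show ?thesis by auto
    qed
    also have "\<dots> \<longleftrightarrow> v = map (g n) (drop n w)"
      by (auto simp: lv lw intro: nth_equalityI)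
    finally show ?thesis .
  qed
  show ?thesis using A B C D by blast
qed

theorem mainTheorem13:
  fixes n m :: nat
  assumes "n \<ge> 1" and "m \<ge> 1"
  shows "(\<forall>w \<in> Nhat (n + m). \<exists>!(u, v). u \<in> Nhat n \<and> v \<in> Nhat m \<and>
            cw_le (nearr u v) w \<and> cw_le w (nwarr u v))
       \<and> (\<Union>(u, v) \<in> Nhat n \<times> Nhat m. Nint (n + m) (nearr u v) (nwarr u v)) = Nhat (n + m)
       \<and> (\<forall>p \<in> Nhat n \<times> Nhat m. \<forall>q \<in> Nhat n \<times> Nhat m. p \<noteq> q \<longrightarrow>
            Nint (n + m) (nearr (fst p) (snd p)) (nwarr (fst p) (snd p)) \<inter>
            Nint (n + m) (nearr (fst q) (snd q)) (nwarr (fst q) (snd q)) = {})"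
proof -
  have ex: "take n w \<in> Nhat n \<and> map (g n) (drop n w) \<in> Nhat m" if w: "w \<in> Nhat (n + m)" for w
  proof -
    obtain t where t: "internal t = n + m" "w = tree_name t" using w by (auto simp: Nhat_def)
    obtain s1 where s1: "internal s1 = n" "tree_name s1 = take n (tree_name t)"
      using prefix_ex[of n t] t by auto
    obtain s2 where s2: "internal s2 = internal t - n" "tree_name s2 = map (g n) (drop n (tree_name t))"
      using suffix_ex[of n t] t by auto
    have "take n w \<in> Nhat n" unfolding Nhat_def using s1 t by (intro CollectI exI[of _ s1]) simp
    moreover have "map (g n) (drop n w) \<in> Nhat m" unfolding Nhat_def using s2 t by (intro CollectI exI[of _ s2]) simp
    ultimately show ?thesis ..
  qed
  have P1: "\<forall>w \<in> Nhat (n + m). \<exists>!(u, v). u \<in> Nhat n \<and> v \<in> Nhat m \<and>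
            cw_le (nearr u v) w \<and> cw_le w (nwarr u v)"
  proof
    fix w assume w: "w \<in> Nhat (n + m)"
    show "\<exists>!(u, v). u \<in> Nhat n \<and> v \<in> Nhat m \<and> cw_le (nearr u v) w \<and> cw_le w (nwarr u v)"
    proof (rule ex1I[of _ "(take n w, map (g n) (drop n w))"])
      show "case (take n w, map (g n) (drop n w)) of (u, v) \<Rightarrow>
          u \<in> Nhat n \<and> v \<in> Nhat m \<and> cw_le (nearr u v) w \<and> cw_le w (nwarr u v)"
        using ex[OF w] char[of "take n w" n "map (g n) (drop n w)" m w] w by auto
    next
      fix p assume "case p of (u, v) \<Rightarrow>
          u \<in> Nhat n \<and> v \<in> Nhat m \<and> cw_le (nearr u v) w \<and> cw_le w (nwarr u v)"
      then show "p = (take n w, map (g n) (drop n w))"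
        using char[of "fst p" n "snd p" m w] w by (cases p) auto
    qed
  qed
  have P2: "(\<Union>(u, v) \<in> Nhat n \<times> Nhat m. Nint (n + m) (nearr u v) (nwarr u v)) = Nhat (n + m)"
  proof
    show "(\<Union>(u, v) \<in> Nhat n \<times> Nhat m. Nint (n + m) (nearr u v) (nwarr u v)) \<subseteq> Nhat (n + m)"
      by (auto simp: Nint_def)
  next
    show "Nhat (n + m) \<subseteq> (\<Union>(u, v) \<in> Nhat n \<times> Nhat m. Nint (n + m) (nearr u v) (nwarr u v))"
    proof
      fix w assume w: "w \<in> Nhat (n + m)"
      then have "w \<in> Nint (n + m) (nearr (take n w) (map (g n) (drop n w))) (nwarr (take n w) (map (g n) (drop n w)))"
        using ex[OF w] char[of "take n w" n "map (g n) (drop n w)" m w] by (auto simp: Nint_def)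
      then show "w \<in> (\<Union>(u, v) \<in> Nhat n \<times> Nhat m. Nint (n + m) (nearr u v) (nwarr u v))"
        using ex[OF w] by blast
    qed
  qed
  have P3: "\<forall>p \<in> Nhat n \<times> Nhat m. \<forall>q \<in> Nhat n \<times> Nhat m. p \<noteq> q \<longrightarrow>
            Nint (n + m) (nearr (fst p) (snd p)) (nwarr (fst p) (snd p)) \<inter>
            Nint (n + m) (nearr (fst q) (snd q)) (nwarr (fst q) (snd q)) = {}"
  proof (intro ballI impI equals0I)
    fix p q w assume p: "p \<in> Nhat n \<times> Nhat m" and q: "q \<in> Nhat n \<times> Nhat m" and pq: "p \<noteq> q"
      and w: "w \<in> Nint (n + m) (nearr (fst p) (snd p)) (nwarr (fst p) (snd p)) \<inter>
            Nint (n + m) (nearr (fst q) (snd q)) (nwarr (fst q) (snd q))"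
    have wN: "w \<in> Nhat (n + m)" using w by (auto simp: Nint_def)
    have "fst p = take n w \<and> snd p = map (g n) (drop n w)"
      using char[of "fst p" n "snd p" m w] p w wN by (auto simp: Nint_def)
    moreover have "fst q = take n w \<and> snd q = map (g n) (drop n w)"
      using char[of "fst q" n "snd q" m w] q w wN by (auto simp: Nint_def)
    ultimately show False using pq by (simp add: prod_eq_iff)
  qed
  show ?thesis using P1 P2 P3 by blast
qed

end
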